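(* Let $\mathbf{F}=(F_1,\ldots,F_d)$ be a vector of finite simple graphs, each with at most $n$ vertices. If $n \leq n' \leq n''$ are integers, then $P_{\mathbf{F};n'} \supseteq P_{\mathbf{F};n''}$.
   Context: For graphs $F,G$, $t^L(F,G)$ is the number of subgraphs of $G$ (not necessarily induced) isomorphic to $F$, and $t(F,G)=t^L(F,G)/t^L(F,K_{|G|})$ if $|F|\le|G|$ and $t(F,G)=0$ otherwise, where $|H|$ is the number of vertices of $H$ and $K_N$ the complete graph on $N$ vertices. Write $t(\mathbf{F},G)=(t(F_1,G),\ldots,t(F_d,G))\in\mathbb{R}^d$. The polytope from subgraph statistics is $P_{\mathbf{F};n}=\mathrm{conv}\{t(\mathbf{F},G)\mid G \text{ a graph on } n \text{ vertices}\}$. *)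

theory Defs
  imports "HOL-Analysis.Analysis"
begin

type_synonym graph = "nat set \<times> nat set set"

definition verts :: "graph \<Rightarrow> nat set" where "verts G = fst G"
definition edges :: "graph \<Rightarrow> nat set set" where "edges G = snd G"

definition simple_graph :: "graph \<Rightarrow> bool" where
  "simple_graph G \<longleftrightarrow> finite (verts G) \<and>
     (\<forall>e\<in>edges G. \<exists>u v. u \<noteq> v \<and> e = {u, v} \<and> u \<in> verts G \<and> v \<in> verts G)"

definition num_verts :: "graph \<Rightarrow> nat" where "num_verts G = card (verts G)"

definition graph_iso :: "graph \<Rightarrow> graph \<Rightarrow> bool" where
  "graph_iso G H \<longleftrightarrow> (\<exists>f. bij_betw f (verts G) (verts H) \<and>
     (\<forall>u\<in>verts G. \<forall>v\<in>verts G. {u, v} \<in> edges G \<longleftrightarrow> {f u, f v} \<in> edges H))"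

definition subgraphs :: "graph \<Rightarrow> graph set" where
  "subgraphs G = {H. simple_graph H \<and> verts H \<subseteq> verts G \<and> edges H \<subseteq> edges G}"

definition tL :: "graph \<Rightarrow> graph \<Rightarrow> nat" where
  "tL F G = card {H \<in> subgraphs G. graph_iso H F}"

definition complete_graph :: "nat \<Rightarrow> graph" where
  "complete_graph N = ({0..<N}, {{u, v} | u v. u < N \<and> v < N \<and> u \<noteq> v})"

definition tdens :: "graph \<Rightarrow> graph \<Rightarrow> real" where
  "tdens F G = (if num_verts F \<le> num_verts G
      then real (tL F G) / real (tL F (complete_graph (num_verts G))) else 0)"

definition tvec :: "('d::finite \<Rightarrow> graph) \<Rightarrow> graph \<Rightarrow> real ^ 'd" where
  "tvec F G = (\<chi> i. tdens (F i) G)"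

definition subgraph_polytope :: "('d::finite \<Rightarrow> graph) \<Rightarrow> nat \<Rightarrow> (real ^ 'd) set" where
  "subgraph_polytope F n = convex hull {tvec F G | G. simple_graph G \<and> num_verts G = n}"

end

theory Submission imports Defs begin


definition ind :: "graph \<Rightarrow> nat set \<Rightarrow> graph" where
  "ind G S = (S, {e \<in> edges G. e \<subseteq> S})"

lemma graph_eq: "G = (verts G, edges G)" by (simp add: verts_def edges_def)

lemma simple_edge_sub: "simple_graph H \<Longrightarrow> e \<in> edges H \<Longrightarrow> e \<subseteq> verts H"
  unfolding simple_graph_def by auto

lemma finite_subgraphs:
  assumes "simple_graph G" shows "finite (subgraphs G)"
proof -
  have fv: "finite (verts G)" using assms simple_graph_def by auto
  have "edges G \<subseteq> Pow (verts G)" using simple_edge_sub[OF assms] by auto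
  hence fe: "finite (edges G)" using fv finite_subset by blast
  have "subgraphs G \<subseteq> Pow (verts G) \<times> Pow (edges G)"
    by (auto simp: subgraphs_def verts_def edges_def mem_Times_iff)
  then show ?thesis using fv fe finite_subset by blast
qed

lemma ind_simple: assumes "simple_graph G" "S \<subseteq> verts G" shows "simple_graph (ind G S)"
  unfolding simple_graph_def
proof (intro conjI ballI)
  show "finite (verts (ind G S))" using assms finite_subset unfolding simple_graph_def ind_def verts_def by auto
  fix e assume e: "e \<in> edges (ind G S)"
  then have e1: "e \<in> edges G" "e \<subseteq> S" by (auto simp: ind_def edges_def)
  then obtain u v where "u \<noteq> v" "e = {u,v}" using assms(1) unfolding simple_graph_def by blast
  then show "\<exists>u v. u \<noteq> v \<and> e = {u, v} \<and> u \<in> verts (ind G S) \<and> v \<in> verts (ind G S)"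
    using e1 by (auto simp: ind_def verts_def)
qed

lemma ind_subgraphs: assumes "S \<subseteq> verts G" shows "subgraphs (ind G S) = {H \<in> subgraphs G. verts H \<subseteq> S}"
proof -
  have "edges H \<subseteq> {e \<in> edges G. e \<subseteq> S}" if "simple_graph H" "edges H \<subseteq> edges G" "verts H \<subseteq> S" for H
    using simple_edge_sub[OF that(1)] that by blast
  then show ?thesis using assms unfolding subgraphs_def ind_def by (auto simp: verts_def edges_def)
qed

lemma iso_card: "graph_iso H F \<Longrightarrow> card (verts H) = card (verts F)"
  unfolding graph_iso_def using bij_betw_same_card by blast

lemma iso_sym: assumes "graph_iso G H" shows "graph_iso H G"
proof -
  obtain f where f: "bij_betw f (verts G) (verts H)"
    "\<forall>u\<in>verts G. \<forall>v\<in>verts G. {u, v} \<in> edges G \<longleftrightarrow> {f u, f v} \<in> edges H"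
    using assms graph_iso_def by blast
  let ?g = "inv_into (verts G) f"
  have g: "bij_betw ?g (verts H) (verts G)" using f(1) bij_betw_inv_into by blast
  have "\<forall>u\<in>verts H. \<forall>v\<in>verts H. {u, v} \<in> edges H \<longleftrightarrow> {?g u, ?g v} \<in> edges G"
  proof (intro ballI)
    fix u v assume uv: "u \<in> verts H" "v \<in> verts H"
    have "?g u \<in> verts G" "?g v \<in> verts G" using g uv bij_betwE by blast+
    moreover have "f (?g u) = u" "f (?g v) = v" using f(1) uv by (meson bij_betw_inv_into_right)+
    ultimately show "{u, v} \<in> edges H \<longleftrightarrow> {?g u, ?g v} \<in> edges G" using f(2) by metis
  qed
  then show ?thesis using g graph_iso_def by blast
qed

lemma iso_trans: assumes "graph_iso G H" "graph_iso H K" shows "graph_iso G K"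
proof -
  obtain f where f: "bij_betw f (verts G) (verts H)"
    "\<forall>u\<in>verts G. \<forall>v\<in>verts G. {u, v} \<in> edges G \<longleftrightarrow> {f u, f v} \<in> edges H"
    using assms graph_iso_def by blast
  obtain g where g: "bij_betw g (verts H) (verts K)"
    "\<forall>u\<in>verts H. \<forall>v\<in>verts H. {u, v} \<in> edges H \<longleftrightarrow> {g u, g v} \<in> edges K"
    using assms graph_iso_def by blast
  have "bij_betw (g \<circ> f) (verts G) (verts K)" using f g bij_betw_trans by blast
  moreover have "\<forall>u\<in>verts G. \<forall>v\<in>verts G. {u, v} \<in> edges G \<longleftrightarrow> {(g\<circ>f) u, (g\<circ>f) v} \<in> edges K"
  proof (intro ballI)
    fix u v assume uv: "u \<in> verts G" "v \<in> verts G"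
    have "f u \<in> verts H" "f v \<in> verts H" using f(1) uv bij_betwE by blast+
    then show "{u, v} \<in> edges G \<longleftrightarrow> {(g\<circ>f) u, (g\<circ>f) v} \<in> edges K"
      using f(2) g(2) uv by simp
  qed
  ultimately show ?thesis unfolding graph_iso_def by blast
qed

lemma tL_le:
  assumes iso: "graph_iso G1 G2" and s1: "simple_graph G1" and s2: "simple_graph G2"
  shows "tL F G1 \<le> tL F G2"
proof -
  obtain f where f: "bij_betw f (verts G1) (verts G2)"
    "\<forall>u\<in>verts G1. \<forall>v\<in>verts G1. {u, v} \<in> edges G1 \<longleftrightarrow> {f u, f v} \<in> edges G2"
    using iso graph_iso_def by blast
  have inj: "inj_on f (verts G1)" using f(1) bij_betw_imp_inj_on by blast
  define m where "m H = (f ` verts H, image f ` edges H)" for H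
  let ?A = "{H \<in> subgraphs G1. graph_iso H F}"
  let ?B = "{H \<in> subgraphs G2. graph_iso H F}"
  have "inj_on m ?A"
  proof
    fix H1 H2 assume h: "H1 \<in> ?A" "H2 \<in> ?A" "m H1 = m H2"
    have v: "verts H1 \<subseteq> verts G1" "verts H2 \<subseteq> verts G1" using h unfolding subgraphs_def by auto
    have s12: "simple_graph H1" "simple_graph H2" using h unfolding subgraphs_def by auto
    have e: "edges H1 \<subseteq> Pow (verts G1)" "edges H2 \<subseteq> Pow (verts G1)"
      using simple_edge_sub[OF s12(1)] simple_edge_sub[OF s12(2)] v by blast+
    have "verts H1 = verts H2" using h(3) v inj unfolding m_def by (simp add: inj_on_image_eq_iff)
    moreover have "edges H1 = edges H2" using h(3) e inj_on_image_Pow[OF inj] unfolding m_def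
      by (simp add: inj_on_image_eq_iff)
    ultimately show "H1 = H2" using graph_eq by metis
  qed
  moreover have "m ` ?A \<subseteq> ?B"
  proof
    fix H' assume "H' \<in> m ` ?A"
    then obtain H where H: "H \<in> ?A" "H' = m H" by blast
    have hs: "simple_graph H" and hv: "verts H \<subseteq> verts G1" and he: "edges H \<subseteq> edges G1"
      using H unfolding subgraphs_def by auto
    have injH: "inj_on f (verts H)" using inj hv inj_on_subset by blast
    have vH': "verts H' = f ` verts H" "edges H' = image f ` edges H"
      using H(2) by (simp_all add: m_def verts_def edges_def)
    have "simple_graph H'"
      unfolding simple_graph_def
    proof (intro conjI ballI)
      show "finite (verts H')" using hs vH' simple_graph_def by auto
      fix e' assume "e' \<in> edges H'"
      then obtain e where e: "e \<in> edges H" "e' = f ` e" using vH' by auto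
      obtain u v where uv: "u \<noteq> v" "e = {u,v}" "u \<in> verts H" "v \<in> verts H"
        using hs e(1) simple_graph_def by blast
      have "f u \<noteq> f v" using injH uv inj_on_def by metis
      moreover have "e' = {f u, f v}" using e uv by simp
      moreover have "f u \<in> verts H'" "f v \<in> verts H'" using vH'(1) uv by simp_all
      ultimately show "\<exists>u v. u \<noteq> v \<and> e' = {u, v} \<and> u \<in> verts H' \<and> v \<in> verts H'"
        by blast
    qed
    moreover have "verts H' \<subseteq> verts G2"
    proof -
      have "f ` verts G1 = verts G2" using f(1) bij_betw_imp_surj_on by blast
      then show ?thesis using vH'(1) hv by blast
    qed
    moreover have "edges H' \<subseteq> edges G2"
    proof
      fix e' assume "e' \<in> edges H'"
      then obtain e where e: "e \<in> edges H" "e' = f ` e" using vH' by auto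
      obtain u v where uv: "e = {u,v}" "u \<in> verts H" "v \<in> verts H"
        using hs e(1) simple_graph_def by blast
      have "u \<in> verts G1" "v \<in> verts G1" "{u,v} \<in> edges G1" using uv hv he e(1) by blast+
      then have "{f u, f v} \<in> edges G2" using f(2) by blast
      then show "e' \<in> edges G2" using e(2) uv(1) by simp
    qed
    moreover have "graph_iso H H'"
    proof -
      have "bij_betw f (verts H) (verts H')" using injH vH' inj_on_imp_bij_betw by auto
      moreover have "\<forall>u\<in>verts H. \<forall>v\<in>verts H. {u, v} \<in> edges H \<longleftrightarrow> {f u, f v} \<in> edges H'"
      proof (intro ballI iffI)
        fix u v assume "u \<in> verts H" "v \<in> verts H" "{u, v} \<in> edges H"
        then have "f ` {u,v} \<in> image f ` edges H" by blast
        then show "{f u, f v} \<in> edges H'" using vH'(2) by simp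
      next
        fix u v assume uv: "u \<in> verts H" "v \<in> verts H" "{f u, f v} \<in> edges H'"
        then obtain e where e: "e \<in> edges H" "f ` {u,v} = f ` e" using vH' by auto
        have "e \<subseteq> verts H" using simple_edge_sub[OF hs e(1)] .
        then have "{u,v} = e" using e(2) injH uv inj_on_image_eq_iff[of f "verts H" "{u,v}" e] by auto
        then show "{u, v} \<in> edges H" using e by simp
      qed
      ultimately show ?thesis unfolding graph_iso_def by blast
    qed
    then have "graph_iso H' F" using H(1) iso_sym iso_trans by blast
    ultimately show "H' \<in> ?B" unfolding subgraphs_def by auto
  qed
  moreover have "finite ?B" using finite_subgraphs[OF s2] by auto
  ultimately show ?thesis unfolding tL_def using card_inj_on_le by blast
qed

lemma tL_iso: "graph_iso G1 G2 \<Longrightarrow> simple_graph G1 \<Longrightarrow> simple_graph G2 \<Longrightarrow> tL F G1 = tL F G2"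
  using tL_le iso_sym le_antisym by metis

lemma count_sup:
  assumes "finite V" "T \<subseteq> V" "card T = k" "k \<le> m"
  shows "card {S. S \<subseteq> V \<and> card S = m \<and> T \<subseteq> S} = (card V - k) choose (m - k)"
proof -
  have fT: "finite T" using assms finite_subset by blast
  have "bij_betw (\<lambda>S. S - T) {S. S \<subseteq> V \<and> card S = m \<and> T \<subseteq> S} {B. B \<subseteq> V - T \<and> card B = m - k}"
  proof (rule bij_betw_byWitness[where f'="\<lambda>B. B \<union> T"])
    show "\<forall>S\<in>{S. S \<subseteq> V \<and> card S = m \<and> T \<subseteq> S}. S - T \<union> T = S" by auto
    show "\<forall>B\<in>{B. B \<subseteq> V - T \<and> card B = m - k}. B \<union> T - T = B" by auto
    show "(\<lambda>S. S - T) ` {S. S \<subseteq> V \<and> card S = m \<and> T \<subseteq> S} \<subseteq> {B. B \<subseteq> V - T \<and> card B = m - k}"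
    proof clarify
      fix S assume S: "S \<subseteq> V" "T \<subseteq> S" "m = card S"
      have "finite S" using S assms finite_subset by blast
      then show "S - T \<subseteq> V - T \<and> card (S - T) = card S - k" using S assms card_Diff_subset fT by auto
    qed
    show "(\<lambda>B. B \<union> T) ` {B. B \<subseteq> V - T \<and> card B = m - k} \<subseteq> {S. S \<subseteq> V \<and> card S = m \<and> T \<subseteq> S}"
    proof clarify
      fix B assume B: "B \<subseteq> V - T" "card B = m - k"
      have "finite B" using B assms finite_subset by blast
      moreover have "B \<inter> T = {}" using B by blast
      ultimately have "card (B \<union> T) = card B + card T" using fT card_Un_disjoint by blast
      then show "B \<union> T \<subseteq> V \<and> card (B \<union> T) = m \<and> T \<subseteq> B \<union> T" using B assms by auto
    qed
  qed
  then have "card {S. S \<subseteq> V \<and> card S = m \<and> T \<subseteq> S} = card {B. B \<subseteq> V - T \<and> card B = m - k}"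
    using bij_betw_same_card by blast
  also have "\<dots> = card (V - T) choose (m - k)" by (rule n_subsets) (use assms in auto)
  also have "card (V - T) = card V - k" using assms card_Diff_subset fT by auto
  finally show ?thesis .
qed

lemma sum_ind:
  assumes G: "simple_graph G" and k: "card (verts F) = k" "k \<le> m"
  shows "(\<Sum>S\<in>{S. S \<subseteq> verts G \<and> card S = m}. real (tL F (ind G S)))
     = real (tL F G) * real ((card (verts G) - k) choose (m - k))"
proof -
  let ?V = "verts G"
  let ?Ss = "{S. S \<subseteq> ?V \<and> card S = m}"
  let ?A = "{H \<in> subgraphs G. graph_iso H F}"
  have fV: "finite ?V" using G simple_graph_def by auto
  have fSs: "finite ?Ss" using fV by (auto intro: finite_subset[of _ "Pow ?V"])
  have fA: "finite ?A" using finite_subgraphs[OF G] by auto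
  have "(\<Sum>S\<in>?Ss. real (tL F (ind G S))) = (\<Sum>S\<in>?Ss. \<Sum>H\<in>?A. if verts H \<subseteq> S then 1 else 0)"
  proof (rule sum.cong[OF refl])
    fix S assume "S \<in> ?Ss"
    then have "S \<subseteq> ?V" by auto
    then have "{H \<in> subgraphs (ind G S). graph_iso H F} = {H \<in> ?A. verts H \<subseteq> S}"
      using ind_subgraphs[of S G] by auto
    then have "tL F (ind G S) = card {H \<in> ?A. verts H \<subseteq> S}" by (simp add: tL_def)
    also have "real \<dots> = (\<Sum>H\<in>?A. if verts H \<subseteq> S then 1 else 0)"
      using fA by (simp add: sum.If_cases) (rule arg_cong[where f=card], blast)
    finally show "real (tL F (ind G S)) = (\<Sum>H\<in>?A. if verts H \<subseteq> S then 1 else 0)" .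
  qed
  also have "\<dots> = (\<Sum>H\<in>?A. \<Sum>S\<in>?Ss. if verts H \<subseteq> S then 1 else 0)" by (rule sum.swap)
  also have "\<dots> = (\<Sum>H\<in>?A. real ((card ?V - k) choose (m - k)))"
  proof (rule sum.cong[OF refl])
    fix H assume H: "H \<in> ?A"
    have "card (verts H) = k" using iso_card[of H F] H k by simp
    moreover have "verts H \<subseteq> ?V" using H subgraphs_def by auto
    ultimately have c: "card {S. S \<subseteq> ?V \<and> card S = m \<and> verts H \<subseteq> S} = (card ?V - k) choose (m - k)"
      using count_sup fV k by blast
    have "(\<Sum>S\<in>?Ss. if verts H \<subseteq> S then 1 else 0) = real (card {S\<in>?Ss. verts H \<subseteq> S})"
      using fSs by (simp add: sum.If_cases) (rule arg_cong[where f=card], blast)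
    also have "{S\<in>?Ss. verts H \<subseteq> S} = {S. S \<subseteq> ?V \<and> card S = m \<and> verts H \<subseteq> S}" by auto
    finally show "(\<Sum>S\<in>?Ss. if verts H \<subseteq> S then 1 else 0) = real ((card ?V - k) choose (m - k))"
      using c by simp
  qed
  also have "\<dots> = real (tL F G) * real ((card ?V - k) choose (m - k))"
    by (simp add: tL_def)
  finally show ?thesis .
qed

lemma complete_simple: "simple_graph (complete_graph N)"
  unfolding simple_graph_def complete_graph_def verts_def edges_def by auto

lemma complete_ind:
  assumes S: "S \<subseteq> {0..<N}"
  shows "tL F (ind (complete_graph N) S) = tL F (complete_graph (card S))"
proof -
  have fS: "finite S" using S finite_subset by blast
  obtain h where h: "bij_betw h S {0..<card S}" using finite_same_card_bij[OF fS, of "{0..<card S}"] by auto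
  have vK: "verts (complete_graph N) = {0..<N}" by (simp add: complete_graph_def verts_def)
  have "graph_iso (ind (complete_graph N) S) (complete_graph (card S))"
    unfolding graph_iso_def
  proof (intro exI conjI)
    show "bij_betw h (verts (ind (complete_graph N) S)) (verts (complete_graph (card S)))"
      using h by (simp add: ind_def complete_graph_def verts_def)
    show "\<forall>u\<in>verts (ind (complete_graph N) S). \<forall>v\<in>verts (ind (complete_graph N) S).
       ({u, v} \<in> edges (ind (complete_graph N) S)) = ({h u, h v} \<in> edges (complete_graph (card S)))"
    proof (intro ballI)
      fix u v assume "u \<in> verts (ind (complete_graph N) S)" "v \<in> verts (ind (complete_graph N) S)"
      then have uv: "u \<in> S" "v \<in> S" by (auto simp: ind_def verts_def)
      have huv: "h u < card S" "h v < card S" using h uv bij_betwE by fastforce+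
      have "{u, v} \<in> edges (ind (complete_graph N) S) \<longleftrightarrow> u \<noteq> v"
      proof
        assume "{u, v} \<in> edges (ind (complete_graph N) S)"
        then obtain a b where "{u,v} = {a,b}" "a \<noteq> b" by (auto simp: ind_def edges_def complete_graph_def)
        then show "u \<noteq> v" by (metis doubleton_eq_iff insert_absorb2)
      next
        assume "u \<noteq> v"
        moreover have "u < N" "v < N" using uv S by auto
        ultimately have "{u,v} \<in> {{a,b}|a b. a<N \<and> b<N \<and> a\<noteq>b}" by blast
        moreover have "{u,v} \<subseteq> S" using uv by simp
        ultimately show "{u, v} \<in> edges (ind (complete_graph N) S)"
          by (simp add: ind_def edges_def complete_graph_def)
      qed
      also have "u \<noteq> v \<longleftrightarrow> h u \<noteq> h v" using h uv by (metis bij_betw_imp_inj_on inj_on_contraD)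
      also have "h u \<noteq> h v \<longleftrightarrow> {h u, h v} \<in> edges (complete_graph (card S))"
      proof
        assume "h u \<noteq> h v"
        then have "{h u, h v} \<in> {{a,b}|a b. a<card S \<and> b<card S \<and> a\<noteq>b}" using huv by blast
        then show "{h u, h v} \<in> edges (complete_graph (card S))"
          by (simp add: edges_def complete_graph_def)
      next
        assume "{h u, h v} \<in> edges (complete_graph (card S))"
        then obtain a b where "{h u, h v} = {a,b}" "a \<noteq> b" by (auto simp: edges_def complete_graph_def)
        then show "h u \<noteq> h v" by (metis doubleton_eq_iff insert_absorb2)
      qed
      finally show "({u, v} \<in> edges (ind (complete_graph N) S)) = ({h u, h v} \<in> edges (complete_graph (card S)))" .
    qed
  qed
  moreover have "simple_graph (ind (complete_graph N) S)" using ind_simple complete_simple S vK by auto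
  ultimately show ?thesis using tL_iso complete_simple by blast
qed

lemma dens_avg:
  assumes G: "simple_graph G" "card (verts G) = N"
    and k: "card (verts Fi) \<le> m" "m \<le> N"
  shows "tdens Fi G = (\<Sum>S\<in>{S. S \<subseteq> verts G \<and> card S = m}. (1 / real (N choose m)) * tdens Fi (ind G S))"
proof -
  define k where "k = card (verts Fi)"
  define Ss where "Ss = {S. S \<subseteq> verts G \<and> card S = m}"
  define a where "a = real (tL Fi G)"
  define b where "b = real (tL Fi (complete_graph N))"
  define bm where "bm = real (tL Fi (complete_graph m))"
  define c where "c = real ((N - k) choose (m - k))"
  define M where "M = real (N choose m)"
  have km: "k \<le> m" using k k_def by simp
  have cpos: "c > 0" using km k unfolding c_def by simp
  have Mpos: "M > 0" using k unfolding M_def by simp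
  have vK: "verts (complete_graph N) = {0..<N}" by (simp add: complete_graph_def verts_def)
  have sG: "(\<Sum>S\<in>Ss. real (tL Fi (ind G S))) = a * c"
    using sum_ind[OF G(1) k_def[symmetric] km] G(2) unfolding Ss_def a_def c_def by simp
  have sK: "(\<Sum>S\<in>{S. S \<subseteq> {0..<N} \<and> card S = m}. real (tL Fi (ind (complete_graph N) S))) = b * c"
    using sum_ind[OF complete_simple k_def[symmetric] km, of N] vK unfolding b_def c_def by simp
  have "(\<Sum>S\<in>{S. S \<subseteq> {0..<N} \<and> card S = m}. real (tL Fi (ind (complete_graph N) S)))
      = (\<Sum>S\<in>{S. S \<subseteq> {0..<N} \<and> card S = m}. bm)"
    using complete_ind unfolding bm_def by (intro sum.cong) auto
  also have "\<dots> = M * bm" using n_subsets[of "{0..<N}" m] unfolding M_def by simp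
  finally have MB: "M * bm = b * c" using sK by simp
  have nvG: "num_verts G = N" using G(2) num_verts_def by simp
  have dG: "tdens Fi G = a / b"
    unfolding tdens_def a_def b_def using nvG k by (simp add: num_verts_def)
  have dS: "tdens Fi (ind G S) = real (tL Fi (ind G S)) / bm" if "S \<in> Ss" for S
  proof -
    have "num_verts (ind G S) = m" using that by (simp add: Ss_def num_verts_def ind_def verts_def)
    then show ?thesis unfolding tdens_def bm_def using k by (simp add: num_verts_def)
  qed
  have "(\<Sum>S\<in>Ss. (1 / M) * tdens Fi (ind G S)) = (\<Sum>S\<in>Ss. (1 / M / bm) * real (tL Fi (ind G S)))"
    using dS by (intro sum.cong) auto
  also have "\<dots> = (1 / M / bm) * (a * c)" using sG by (simp add: sum_divide_distrib[symmetric])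
  also have "\<dots> = a / b"
  proof (cases "b = 0")
    case True
    then have "bm = 0" using MB Mpos by simp
    then show ?thesis using True by simp
  next
    case False
    then have "bm \<noteq> 0" using MB cpos by auto
    then show ?thesis using MB False cpos Mpos by (simp add: field_simps)
  qed
  finally show ?thesis using dG unfolding Ss_def M_def by simp
qed

theorem proposition2p7:
  fixes F :: "'d::finite \<Rightarrow> graph" and n n' n'' :: nat
  assumes "\<forall>i. simple_graph (F i)"
    and "\<forall>i. num_verts (F i) \<le> n"
    and "n \<le> n'" and "n' \<le> n''"
  shows "subgraph_polytope F n'' \<subseteq> subgraph_polytope F n'"
  unfolding subgraph_polytope_def
proof (rule hull_minimal[where S=convex, OF _ convex_convex_hull], clarify)
  fix G assume G: "simple_graph G" "n'' = num_verts G"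
  define C where "C = convex hull {tvec F G |G. simple_graph G \<and> num_verts G = n'}"
  define Ss where "Ss = {S. S \<subseteq> verts G \<and> card S = n'}"
  define M where "M = real (n'' choose n')"
  have cG: "card (verts G) = n''" using G num_verts_def by simp
  have fV: "finite (verts G)" using G simple_graph_def by auto
  have Mpos: "M > 0" using assms unfolding M_def by simp
  have fSs: "finite Ss" using fV unfolding Ss_def by (auto intro: finite_subset[of _ "Pow (verts G)"])
  have cSs: "card Ss = n'' choose n'" using n_subsets[OF fV, of n'] cG unfolding Ss_def by simp
  have eq: "tvec F G = (\<Sum>S\<in>Ss. (1 / M) *\<^sub>R tvec F (ind G S))"
  proof (subst vec_eq_iff, intro allI)
    fix i
    have "card (verts (F i)) \<le> n'" using assms num_verts_def by (metis le_trans)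
    then show "tvec F G $ i = (\<Sum>S\<in>Ss. (1 / M) *\<^sub>R tvec F (ind G S)) $ i"
      using dens_avg[OF G(1) cG _ assms(4), of "F i"] unfolding Ss_def M_def tvec_def by simp
  qed
  have "(\<Sum>S\<in>Ss. (1 / M) *\<^sub>R tvec F (ind G S)) \<in> C"
  proof (rule convex_sum[OF fSs])
    show "convex C" unfolding C_def by (rule convex_convex_hull)
    show "(\<Sum>S\<in>Ss. 1 / M) = 1" using cSs Mpos unfolding M_def by simp
    show "\<And>S. S \<in> Ss \<Longrightarrow> 0 \<le> 1 / M" using Mpos by simp
    fix S assume S: "S \<in> Ss"
    then have "simple_graph (ind G S)" "num_verts (ind G S) = n'"
      using ind_simple[OF G(1)] unfolding Ss_def by (auto simp: num_verts_def ind_def verts_def)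
    then show "tvec F (ind G S) \<in> C" unfolding C_def by (intro hull_inc) blast
  qed
  then show "tvec F G \<in> C" using eq by simp
qed

end
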